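(* For a finite rooted tree $T$ whose nodes $v$ carry labels $\ell(v)\in\mathbb{N}=\{1,2,\dots\}$, let $p_i$ denote the $i$-th prime, let $n_v$ be the number of vertices in the subtree $T_v$ rooted at $v$, and define $C_v(x)\in\mathbb{Z}[x]$ inductively by $C_v(x)=x+p_{\ell(v)}$ if $v$ is a leaf and $C_v(x)=x^{n_v}+p_{\ell(v)}\,x\prod_{u\text{ child of }v}C_u(x)+p_{\ell(v)}$ if $v$ is internal. Let $r$ be the root of $T$. Then $C_r(x)$ is a complete invariant for rooted labelled trees: for any two such labelled rooted trees $T$ (root $r$) and $T'$ (root $r'$), $C_r(x)=C_{r'}(x)$ if and only if there is an isomorphism of rooted trees from $T$ to $T'$ preserving labels.
   Context: An isomorphism of rooted labelled trees is a graph isomorphism mapping root to root and each node to a node with the same label. $T_v$ consists of $v$ and all its descendants. *)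

theory Defs
  imports "HOL-Computational_Algebra.Computational_Algebra" "HOL-Library.Infinite_Set"
begin

text \<open>Finite rooted labelled trees: a node carries a label and the list of its child subtrees.
  The order of the list is irrelevant for isomorphism (see ltree_iso).\<close>
datatype ltree = Node (label: nat) (children: "ltree list")

fun labels_pos :: "ltree \<Rightarrow> bool" where
  "labels_pos (Node l cs) = (1 \<le> l \<and> (\<forall>c\<in>set cs. labels_pos c))"

text \<open>The i-th prime, 1-indexed: nth_prime 1 = 2, nth_prime 2 = 3, ...\<close>
definition nth_prime :: "nat \<Rightarrow> nat" where
  "nth_prime i = enumerate {p::nat. prime p} (i - 1)"

fun nverts :: "ltree \<Rightarrow> nat" where
  "nverts (Node l cs) = 1 + sum_list (map nverts cs)"

fun Cpoly :: "ltree \<Rightarrow> int poly" where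
  "Cpoly (Node l cs) =
     (if cs = [] then [:int (nth_prime l), 1:]
      else monom 1 (nverts (Node l cs))
           + smult (int (nth_prime l)) (monom 1 1 * prod_list (map Cpoly cs))
           + [:int (nth_prime l):])"

text \<open>For trees this is exactly a root-preserving,
  label-preserving graph isomorphism.\<close>
inductive ltree_iso :: "ltree \<Rightarrow> ltree \<Rightarrow> bool" where
  "bij_betw f {..<length cs} {..<length ds} \<Longrightarrow>
   (\<forall>i<length cs. ltree_iso (cs ! i) (ds ! f i)) \<Longrightarrow>
   ltree_iso (Node l cs) (Node l ds)"

end

theory Submission
  imports Defs "HOL-Combinatorics.Permutations"
begin
lemma eis_aux:
  fixes P a b :: "int poly" and q :: int
  assumes q: "prime q" and P: "P = a * b"
    and da: "degree a \<ge> 1" and db: "degree b \<ge> 1"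
    and low: "\<forall>i<degree P. q dvd coeff P i"
    and a0: "q dvd coeff a 0" and b0: "\<not> q dvd coeff b 0" and la: "\<not> q dvd lead_coeff a"
  shows False
proof -
  have nz: "a \<noteq> 0" "b \<noteq> 0" using da db by auto
  define k where "k = (LEAST k. \<not> q dvd coeff a k)"
  have k1: "\<not> q dvd coeff a k" unfolding k_def by (rule LeastI[of _ "degree a"]) (rule la)
  have k2: "k \<le> degree a" unfolding k_def by (rule Least_le) (rule la)
  have k3: "\<And>i. i < k \<Longrightarrow> q dvd coeff a i" unfolding k_def using not_less_Least by blast
  have dP: "degree P = degree a + degree b" using P nz degree_mult_eq by blast
  have "k < degree P" using k2 db dP by linarith
  hence "q dvd coeff P k" using low by blast
  moreover have "coeff P k = (\<Sum>i<k. coeff a i * coeff b (k - i)) + coeff a k * coeff b 0"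
    unfolding P coeff_mult by (simp add: atMost_Suc lessThan_Suc_atMost[symmetric])
  moreover have "q dvd (\<Sum>i<k. coeff a i * coeff b (k - i))"
    by (intro dvd_sum) (simp add: k3)
  ultimately have "q dvd coeff a k * coeff b 0" by (simp add: dvd_add_right_iff)
  thus False using q k1 b0 prime_dvd_mult_iff by blast
qed

lemma const_unit:
  fixes P a :: "int poly"
  assumes "P dvd Q" "degree P = 0" "coprime (coeff Q 0) (lead_coeff Q)" "Q \<noteq> 0"
  shows "is_unit P"
proof -
  obtain c where c: "P = [:c:]" using assms(2) degree_eq_zeroE by blast
  obtain r where r: "Q = [:c:] * r" using assms(1) c by (auto elim: dvdE)
  have "c dvd coeff Q 0" using r by simp
  moreover have "c dvd lead_coeff Q" using r by (simp add: lead_coeff_mult)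
  ultimately have "is_unit c" using assms(3) coprime_common_divisor by blast
  thus ?thesis using c is_unit_const_poly_iff by blast
qed

lemma eis:
  fixes P :: "int poly" and q :: int
  assumes q: "prime q" and lc: "\<not> q dvd lead_coeff P" and dP: "degree P \<ge> 1"
    and low: "\<forall>i<degree P. q dvd coeff P i" and c0: "\<not> q^2 dvd coeff P 0"
    and cop: "coprime (coeff P 0) (lead_coeff P)"
  shows "irreducible P"
proof (rule irreducibleI)
  show nz: "P \<noteq> 0" using dP by auto
  show "\<not> is_unit P" using dP by (auto simp: is_unit_poly_iff)
  fix a b assume P: "P = a * b"
  show "is_unit a \<or> is_unit b"
  proof (rule ccontr)
    assume nu: "\<not> (is_unit a \<or> is_unit b)"
    have "degree a \<noteq> 0" using const_unit[of a P] P nz cop nu by auto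
    moreover have "degree b \<noteq> 0" using const_unit[of b P] P nz cop nu by auto
    ultimately have da: "degree a \<ge> 1" and db: "degree b \<ge> 1" by auto
    have "q dvd coeff P 0" using low dP by auto
    hence "q dvd coeff a 0 * coeff b 0" using P by (simp add: coeff_mult)
    hence ab: "q dvd coeff a 0 \<or> q dvd coeff b 0" using q prime_dvd_mult_iff by blast
    have nboth: "\<not> (q dvd coeff a 0 \<and> q dvd coeff b 0)"
    proof
      assume "q dvd coeff a 0 \<and> q dvd coeff b 0"
      hence "q * q dvd coeff a 0 * coeff b 0" by (auto intro: mult_dvd_mono)
      thus False using c0 P by (simp add: coeff_mult power2_eq_square)
    qed
    have lab: "\<not> q dvd lead_coeff a" "\<not> q dvd lead_coeff b"
      using lc P by (auto simp: lead_coeff_mult)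
    show False
    proof (cases "q dvd coeff a 0")
      case True
      then show False using eis_aux[OF q P da db low True _ lab(1)] nboth by blast
    next
      case False
      hence "q dvd coeff b 0" using ab by blast
      moreover have "P = b * a" using P by (simp add: mult.commute)
      ultimately show False using eis_aux[OF q _ db da low _ False lab(2)] P by simp
    qed
  qed
qed

lemma prodlist_props:
  fixes ps :: "int poly list"
  assumes "\<forall>p\<in>set ps. lead_coeff p > 0"
  shows "degree (prod_list ps) = sum_list (map degree ps) \<and> lead_coeff (prod_list ps) > 0"
  using assms
proof (induction ps)
  case Nil then show ?case by simp
next
  case (Cons p ps)
  then have h: "degree (prod_list ps) = sum_list (map degree ps)" "lead_coeff (prod_list ps) > 0"
    "lead_coeff p > 0" by auto
  then have nz: "p \<noteq> 0" "prod_list ps \<noteq> 0" by auto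
  have "lead_coeff (p * prod_list ps) = lead_coeff p * lead_coeff (prod_list ps)" by (rule lead_coeff_mult)
  moreover have "degree (p * prod_list ps) = degree p + degree (prod_list ps)" using nz by (rule degree_mult_eq)
  ultimately show ?case using h by simp
qed

lemma nverts_pos: "nverts t \<ge> 1"
  by (cases t) simp

lemma nth_prime_prime: "prime (nth_prime l)"
  unfolding nth_prime_def using enumerate_in_set[OF primes_infinite] by blast

lemma nth_prime_inj: "1 \<le> l \<Longrightarrow> 1 \<le> l' \<Longrightarrow> nth_prime l = nth_prime l' \<Longrightarrow> l = l'"
proof -
  assume a: "1 \<le> l" "1 \<le> l'" "nth_prime l = nth_prime l'"
  have "l - 1 = l' - 1" using a(3) unfolding nth_prime_def
    using strict_mono_eq[OF strict_mono_enumerate[OF primes_infinite]] by blast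
  then show "l = l'" using a(1,2) by linarith
qed

declare Cpoly.simps[simp del]

lemma Cpoly_props:
  "degree (Cpoly t) = nverts t
   \<and> coeff (Cpoly t) 0 = int (nth_prime (label t))
   \<and> (\<exists>k\<ge>0. lead_coeff (Cpoly t) = 1 + int (nth_prime (label t)) * k)
   \<and> (\<forall>i<degree (Cpoly t). int (nth_prime (label t)) dvd coeff (Cpoly t) i)"
proof (induction t)
  case (Node l cs)
  define p where "p = int (nth_prime l)"
  show ?case
  proof (cases "cs = []")
    case True
    then show ?thesis by (auto simp: p_def Cpoly.simps intro!: exI[of _ 0])
  next
    case False
    define Q where "Q = prod_list (map Cpoly cs)"
    define n where "n = nverts (Node l cs)"
    have pos: "\<forall>q\<in>set (map Cpoly cs). lead_coeff q > 0"
    proof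
      fix q assume "q \<in> set (map Cpoly cs)"
      then obtain c where c: "c \<in> set cs" "q = Cpoly c" by auto
      from Node[OF c(1)] obtain k where "k \<ge> 0" "lead_coeff q = 1 + int (nth_prime (label c)) * k"
        using c by auto
      then show "lead_coeff q > 0" by (smt (verit) mult_nonneg_nonneg of_nat_0_le_iff)
    qed
    have dQ: "degree Q = sum_list (map nverts cs)" and lQ: "lead_coeff Q > 0"
      using prodlist_props[OF pos] Node unfolding Q_def by (auto simp: o_def cong: map_cong)
    have n: "n = 1 + degree Q" unfolding n_def dQ by simp
    have C: "Cpoly (Node l cs) = monom 1 n + smult p (monom 1 1 * Q) + [:p:]"
      using False by (simp add: p_def Q_def n_def Cpoly.simps)
    have co: "coeff (Cpoly (Node l cs)) i =
       (if i = n then 1 else 0) + p * (if 1 \<le> i then coeff Q (i - 1) else 0) + (if i = 0 then p else 0)" for i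
      unfolding C by (simp add: coeff_monom coeff_monom_mult coeff_pCons split: nat.split)
    have cn: "coeff (Cpoly (Node l cs)) n = 1 + p * lead_coeff Q"
      using co[of n] n by simp
    have p0: "p > 0" unfolding p_def using nth_prime_prime prime_gt_0_nat by auto
    have "coeff (Cpoly (Node l cs)) n \<noteq> 0" using cn p0 lQ by (smt (verit) mult_pos_pos)
    hence d1: "n \<le> degree (Cpoly (Node l cs))" by (rule le_degree)
    have "degree (Cpoly (Node l cs)) \<le> n"
    proof (rule degree_le, intro allI impI)
      fix i assume "n < i"
      then show "coeff (Cpoly (Node l cs)) i = 0" using co[of i] n coeff_eq_0[of Q "i - 1"] by auto
    qed
    with d1 have deg: "degree (Cpoly (Node l cs)) = n" by simp
    have c0: "coeff (Cpoly (Node l cs)) 0 = p" using co[of 0] n by simp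
    have low: "\<forall>i<degree (Cpoly (Node l cs)). p dvd coeff (Cpoly (Node l cs)) i"
      using co deg by auto
    have "lead_coeff Q \<ge> 0" using lQ by simp
    moreover have lead: "lead_coeff (Cpoly (Node l cs)) = 1 + p * lead_coeff Q" using deg cn by simp
    ultimately have ex: "\<exists>k\<ge>0. lead_coeff (Cpoly (Node l cs)) = 1 + p * k" by blast
    show ?thesis unfolding ltree.sel p_def[symmetric]
    proof (intro conjI)
      show "degree (Cpoly (Node l cs)) = nverts (Node l cs)" by (simp only: deg n_def)
    qed (fact c0 ex low)+
  qed
qed

lemma Cpoly_prime: "prime (Cpoly t)"
proof -
  define p where "p = int (nth_prime (label t))"
  have pr: "prime p" unfolding p_def using nth_prime_prime by simp
  from Cpoly_props[of t] obtain k where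
    deg: "degree (Cpoly t) = nverts t" and c0: "coeff (Cpoly t) 0 = p" and
    k: "k \<ge> 0" "lead_coeff (Cpoly t) = 1 + p * k" and
    low: "\<forall>i<degree (Cpoly t). p dvd coeff (Cpoly t) i"
    unfolding p_def by blast
  have np1: "\<not> p dvd 1" using pr not_prime_unit by blast
  have lc: "\<not> p dvd lead_coeff (Cpoly t)"
  proof
    assume "p dvd lead_coeff (Cpoly t)"
    hence "p dvd 1 + p * k" using k by simp
    hence "p dvd 1" by (simp add: dvd_add_left_iff)
    thus False using np1 by simp
  qed
  have c0': "\<not> p^2 dvd coeff (Cpoly t) 0"
  proof
    assume "p^2 dvd coeff (Cpoly t) 0"
    hence "p * p dvd p * 1" using c0 by (simp add: power2_eq_square)
    hence "p dvd 1" using pr by (subst (asm) dvd_mult_cancel_left) (auto simp: prime_gt_0_int)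
    thus False using np1 by simp
  qed
  have cop: "coprime (coeff (Cpoly t) 0) (lead_coeff (Cpoly t))"
  proof (rule coprimeI)
    fix d assume "d dvd coeff (Cpoly t) 0" "d dvd lead_coeff (Cpoly t)"
    hence "d dvd p" "d dvd 1 + p * k" using c0 k by auto
    hence "d dvd p * k" "d dvd 1 + p * k" by auto
    thus "is_unit d" by (simp add: dvd_add_left_iff)
  qed
  have "degree (Cpoly t) \<ge> 1" using deg nverts_pos by simp
  hence irr: "irreducible (Cpoly t)" using eis[OF pr lc _ low c0' cop] by simp
  have pos: "lead_coeff (Cpoly t) > 0" using k pr
    by (smt (verit) mult_nonneg_nonneg prime_gt_0_int)
  have "normalize (Cpoly t) = Cpoly t"
    using pos by (simp add: normalize_poly_def pCons_one)
  then show ?thesis using irr by (simp add: prime_def prime_elem_iff_irreducible)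
qed

lemma nverts_ge2: "cs \<noteq> [] \<Longrightarrow> nverts (Node l cs) \<ge> 2"
proof -
  assume "cs \<noteq> []"
  then obtain c where c: "c \<in> set cs" by (cases cs) auto
  have "nverts c \<le> sum_list (map nverts cs)" using c by (intro member_le_sum_list) auto
  then show ?thesis using nverts_pos[of c] by simp
qed

lemma eq_of_iso: "ltree_iso T T' \<Longrightarrow> Cpoly T = Cpoly T' \<and> nverts T = nverts T'"
proof (induction rule: ltree_iso.induct)
  case (1 f cs ds l)
  have len: "length cs = length ds" using bij_betw_same_card[OF 1(1)] by simp
  have P: "prod_list (map Cpoly cs) = prod_list (map Cpoly ds)"
  proof -
    have "prod_list (map Cpoly cs) = (\<Prod>i\<in>{..<length cs}. Cpoly (cs ! i))"
      by (simp add: prod.list_conv_set_nth atLeast0LessThan)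
    also have "\<dots> = (\<Prod>i\<in>{..<length cs}. Cpoly (ds ! f i))" using 1(2) by (intro prod.cong) auto
    also have "\<dots> = (\<Prod>j\<in>{..<length ds}. Cpoly (ds ! j))" by (rule prod.reindex_bij_betw[OF 1(1)])
    also have "\<dots> = prod_list (map Cpoly ds)"
      by (simp add: prod.list_conv_set_nth atLeast0LessThan)
    finally show ?thesis .
  qed
  have S: "sum_list (map nverts cs) = sum_list (map nverts ds)"
  proof -
    have "sum_list (map nverts cs) = (\<Sum>i\<in>{..<length cs}. nverts (cs ! i))"
      by (simp add: sum.list_conv_set_nth atLeast0LessThan)
    also have "\<dots> = (\<Sum>i\<in>{..<length cs}. nverts (ds ! f i))" using 1(2) by (intro sum.cong) auto
    also have "\<dots> = (\<Sum>j\<in>{..<length ds}. nverts (ds ! j))" by (rule sum.reindex_bij_betw[OF 1(1)])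
    also have "\<dots> = sum_list (map nverts ds)"
      by (simp add: sum.list_conv_set_nth atLeast0LessThan)
    finally show ?thesis .
  qed
  have N: "nverts (Node l cs) = nverts (Node l ds)" using S by simp
  have E: "cs = [] \<longleftrightarrow> ds = []" using len by auto
  show ?case
  proof
    show "Cpoly (Node l cs) = Cpoly (Node l ds)"
      using E N P by (simp only: Cpoly.simps)
  qed (fact N)
qed

lemma iso_of_eq: "labels_pos T \<Longrightarrow> labels_pos T' \<Longrightarrow> Cpoly T = Cpoly T' \<Longrightarrow> ltree_iso T T'"
proof (induction T arbitrary: T')
  case (Node l cs)
  obtain l' ds where T': "T' = Node l' ds" by (cases T')
  have lp: "1 \<le> l" "1 \<le> l'" "\<forall>c\<in>set cs. labels_pos c" "\<forall>d\<in>set ds. labels_pos d"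
    using Node.prems T' by auto
  have eq: "Cpoly (Node l cs) = Cpoly (Node l' ds)" using Node.prems T' by simp
  have "int (nth_prime l) = int (nth_prime l')"
    using Cpoly_props[of "Node l cs"] Cpoly_props[of "Node l' ds"] eq by simp
  hence ll: "l = l'" using nth_prime_inj lp(1,2) by simp
  have nv: "nverts (Node l cs) = nverts (Node l' ds)"
    using Cpoly_props[of "Node l cs"] Cpoly_props[of "Node l' ds"] eq by simp
  have A: "nverts (Node l []) = 1" "nverts (Node l' []) = 1" by simp_all
  have E: "cs = [] \<longleftrightarrow> ds = []"
  proof
    assume "cs = []"
    show "ds = []"
    proof (rule ccontr)
      assume "ds \<noteq> []"
      then have "nverts (Node l' ds) \<ge> 2" by (rule nverts_ge2)
      then show False using nv[unfolded \<open>cs = []\<close>] A by linarith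
    qed
  next
    assume "ds = []"
    show "cs = []"
    proof (rule ccontr)
      assume "cs \<noteq> []"
      then have "nverts (Node l cs) \<ge> 2" by (rule nverts_ge2)
      then show False using nv[unfolded \<open>ds = []\<close>] A by linarith
    qed
  qed
  show ?case
  proof (cases "cs = []")
    case True
    then have "ds = []" using E by simp
    then show ?thesis unfolding T' ll using True
      by (intro ltree_iso.intros[where f = id]) auto
  next
    case False
    hence dsne: "ds \<noteq> []" using E by simp
    define p where "p = int (nth_prime l)"
    have p0: "p \<noteq> 0" unfolding p_def using nth_prime_prime prime_gt_0_nat by (metis of_nat_eq_0_iff not_prime_0)
    have "monom 1 (nverts (Node l cs)) + smult p (monom 1 1 * prod_list (map Cpoly cs)) + [:p:]
        = monom 1 (nverts (Node l cs)) + smult p (monom 1 1 * prod_list (map Cpoly ds)) + [:p:]"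
      using eq False dsne nv unfolding ll p_def by (simp only: Cpoly.simps if_False)
    hence "smult p (monom 1 1 * prod_list (map Cpoly cs)) = smult p (monom 1 1 * prod_list (map Cpoly ds))"
      by simp
    hence "monom 1 1 * prod_list (map Cpoly cs) = monom 1 1 * prod_list (map Cpoly ds)"
      using smult_cancel p0 by blast
    hence Q: "prod_list (map Cpoly cs) = prod_list (map Cpoly ds)"
      by (simp add: monom_eq_0_iff)
    have pf: "prime_factorization (prod_list (map Cpoly xs)) = mset (map Cpoly xs)" for xs
    proof -
      have e: "prod_list (map Cpoly xs) = prod_mset (mset (map Cpoly xs))"
        by (rule prod_mset_prod_list[symmetric])
      show ?thesis unfolding e
        by (rule prime_factorization_prod_mset_primes) (auto simp: Cpoly_prime)
    qed
    have M: "mset (map Cpoly cs) = mset (map Cpoly ds)" using pf[of cs] pf[of ds] Q by simp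
    have len: "length cs = length ds" using mset_eq_length[OF M] by simp
    obtain \<pi> where pi: "\<pi> permutes {..<length (map Cpoly ds)}"
      "permute_list \<pi> (map Cpoly ds) = map Cpoly cs"
      using mset_eq_permutation[OF M] by blast
    have pi': "\<pi> permutes {..<length ds}" using pi(1) by simp
    have bij: "bij_betw \<pi> {..<length cs} {..<length ds}" using permutes_imp_bij[OF pi'] len by simp
    have "ltree_iso (cs ! i) (ds ! \<pi> i)" if i: "i < length cs" for i
    proof -
      have pin: "\<pi> i < length ds" using permutes_in_image[OF pi'] i len by simp
      have "Cpoly (cs ! i) = map Cpoly cs ! i" using i by simp
      also have "\<dots> = permute_list \<pi> (map Cpoly ds) ! i" using pi(2) by simp
      also have "\<dots> = map Cpoly ds ! \<pi> i" using permute_list_nth[OF pi(1)] i len by simp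
      also have "\<dots> = Cpoly (ds ! \<pi> i)" using pin by simp
      finally have ce: "Cpoly (cs ! i) = Cpoly (ds ! \<pi> i)" .
      have mem: "cs ! i \<in> set cs" using i by simp
      show ?thesis using Node.IH[OF mem _ _ ce] lp(3) lp(4) mem pin nth_mem by blast
    qed
    then show ?thesis unfolding T' ll using bij by (intro ltree_iso.intros) auto
  qed
qed

theorem mainTheorem5:
  fixes T T' :: ltree
  assumes "labels_pos T" and "labels_pos T'"
  shows "Cpoly T = Cpoly T' \<longleftrightarrow> ltree_iso T T'"
  using iso_of_eq[OF assms] eq_of_iso by blast
end
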